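(* Consider the corrupted Lipschitz contextual search problem with pricing loss described in the context, and assume the corruption budget $C\ge 1$ is known to the learner. If the learner runs Algorithm 3 (described in the context) with $\eta_0=T^{-1/(d+1)}$ and $\tau_0=\sqrt{T/C}$, then for every $L$-Lipschitz $f$, context sequence and adaptive corruption strategy with at most $C$ corrupted rounds, the total pricing loss is at most \[ L\cdot\widetilde{O}\big(T^{d/(d+1)}+\sqrt{TC}\big), \] where $\widetilde O$ hides logarithmic factors in $T$.
   Context: Problem. Fix $L>0$, $d\ge 1$, horizon $T\ge 2$. An adversary fixes an unknown $f:[0,1]^d\to[0,L]$ with $|f(x)-f(y)|\le L\|x-y\|_\infty$. In each round $t=1,\dots,T$: the adversary chooses $x_t\in[0,1]^d$; the learner observes $x_t$ and posts a guess $q_t$; the adversary observes $q_t$ and sends $\sigma_t\in\{0,1\}$. With $\sigma(u)=1$ if $u>0$, $0$ if $u\le 0$: in uncorrupted rounds $\sigma_t=\sigma(q_t-f(x_t))$, in corrupted rounds $\sigma_t=1-\sigma(q_t-f(x_t))$; the adversary chooses adaptively (after seeing $q_t$) which rounds to corrupt, with at most $C$ corrupted rounds. The pricing loss of round $t$ is $f(x_t)-q_t\cdot\mathbb{1}[q_t\le f(x_t)]$. $\mathtt{len}$ denotes length of an interval and side length of a hypercube. Subroutine $\mathtt{MidpointQuery}(I,Y)$, $Y=[a,b]$: guess $q=(a+b)/2$; if $\sigma_t=1$ return $Y\cap[0,q+L\,\mathtt{len}(I)]$, if $\sigma_t=0$ return $Y\cap[q-L\,\mathtt{len}(I),\infty)$.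 Algorithm 3 (parameters $\eta_0$, $\tau_0$). Uniformly partition $[0,1]^d$ into hypercubes of side length $\Theta(\eta_0)$; each hypercube $I_j$ has range $Y_j$ (initially $[0,L]$) and counter $c_j$ (initially $0$). In round $t$, with $I_j\ni x_t$: if $\mathtt{len}(Y_j)<10L\eta_0$, set $c_j:=c_j+1$; if $c_j>\tau_0$ guess $\max(Y_j)$ (checking round) and set $c_j:=0$, else guess $\min(Y_j)$ (pricing round); if a checking round receives $\sigma_t=0$ or a pricing round receives $\sigma_t=1$ (the learner is "surprised"), set $Y_j:=[0,L]$, $c_j:=0$. Otherwise (searching round) set $Y_j:=\mathtt{MidpointQuery}(I_j,Y_j)$. *)

theory Defs
  imports Complex_Main
begin

(* Contexts are points of [0,1]^d, represented as functions nat => real that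
   lie in [0,1] on coordinates < d and vanish on coordinates >= d. *)
definition cube :: "nat \<Rightarrow> (nat \<Rightarrow> real) set" where
  "cube d = {x. (\<forall>i<d. 0 \<le> x i \<and> x i \<le> 1) \<and> (\<forall>i\<ge>d. x i = 0)}"

definition sup_dist :: "nat \<Rightarrow> (nat \<Rightarrow> real) \<Rightarrow> (nat \<Rightarrow> real) \<Rightarrow> real" where
  "sup_dist d x y = Max ((\<lambda>i. \<bar>x i - y i\<bar>) ` {..<d})"

definition lip_target :: "nat \<Rightarrow> real \<Rightarrow> ((nat \<Rightarrow> real) \<Rightarrow> real) \<Rightarrow> bool" where
  "lip_target d L f \<longleftrightarrow>
     (\<forall>x\<in>cube d. 0 \<le> f x \<and> f x \<le> L) \<and>
     (\<forall>x\<in>cube d. \<forall>y\<in>cube d. \<bar>f x - f y\<bar> \<le> L * sup_dist d x y)"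

definition pricing_loss :: "real \<Rightarrow> real \<Rightarrow> real" where
  "pricing_loss v q = v - (if q \<le> v then q else 0)"

(* uniform partition: m = ceil(1/eta) cells per axis, side length 1/m in (eta/2, eta] *)
definition ncells :: "real \<Rightarrow> nat" where
  "ncells \<eta> = nat \<lceil>1 / \<eta>\<rceil>"

definition cell_of :: "nat \<Rightarrow> nat \<Rightarrow> (nat \<Rightarrow> real) \<Rightarrow> nat list" where
  "cell_of d m x = map (\<lambda>i. min (nat \<lfloor>x i * real m\<rfloor>) (m - 1)) [0..<d]"

(* per-cell state: range Y_j = [a,b] and counter c_j *)
type_synonym cellst = "real \<times> real \<times> nat"
type_synonym lstate = "nat list \<Rightarrow> cellst"
(* history entries: context x_t, guess q_t, feedback sigma_t, corrupted-flag *)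
type_synonym hist = "((nat \<Rightarrow> real) \<times> real \<times> bool \<times> bool) list"

definition alg3_guess :: "nat \<Rightarrow> real \<Rightarrow> real \<Rightarrow> real \<Rightarrow> lstate \<Rightarrow> (nat \<Rightarrow> real) \<Rightarrow> real" where
  "alg3_guess d L \<eta> \<tau> S x =
     (case S (cell_of d (ncells \<eta>) x) of (a, b, c) \<Rightarrow>
        if b - a < 10 * L * \<eta> then (if real (c + 1) > \<tau> then b else a)
        else (a + b) / 2)"

definition alg3_update :: "nat \<Rightarrow> real \<Rightarrow> real \<Rightarrow> real \<Rightarrow> lstate \<Rightarrow> (nat \<Rightarrow> real) \<Rightarrow> bool \<Rightarrow> lstate" where
  "alg3_update d L \<eta> \<tau> S x \<sigma> =
     (let j = cell_of d (ncells \<eta>) x; len = 1 / real (ncells \<eta>) in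
      case S j of (a, b, c) \<Rightarrow>
        if b - a < 10 * L * \<eta> then
          (if real (c + 1) > \<tau> then
             (if \<sigma> then S(j := (a, b, 0)) else S(j := (0, L, 0)))
           else
             (if \<sigma> then S(j := (0, L, 0)) else S(j := (a, b, c + 1))))
        else
          (let q = (a + b) / 2 in
           if \<sigma> then S(j := (max a 0, min b (q + L * len), c))
           else S(j := (max a (q - L * len), b, c))))"

(* Interaction of Algorithm 3 with an adaptive adversary (advx picks the context
   from the history, advc decides corruption after seeing context and guess). *)
fun alg3_run :: "nat \<Rightarrow> real \<Rightarrow> real \<Rightarrow> real \<Rightarrow> ((nat \<Rightarrow> real) \<Rightarrow> real) \<Rightarrow>
    (hist \<Rightarrow> (nat \<Rightarrow> real)) \<Rightarrow> (hist \<Rightarrow> (nat \<Rightarrow> real) \<Rightarrow> real \<Rightarrow> bool) \<Rightarrow> nat \<Rightarrow> lstate \<times> hist" where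
  "alg3_run d L \<eta> \<tau> f advx advc 0 = ((\<lambda>_. (0, L, 0)), [])"
| "alg3_run d L \<eta> \<tau> f advx advc (Suc t) =
     (case alg3_run d L \<eta> \<tau> f advx advc t of (S, h) \<Rightarrow>
        let x = advx h;
            q = alg3_guess d L \<eta> \<tau> S x;
            cr = advc h x q;
            \<sigma> = (if cr then \<not> (q > f x) else q > f x)
        in (alg3_update d L \<eta> \<tau> S x \<sigma>, h @ [(x, q, \<sigma>, cr)]))"

definition run_hist where
  "run_hist d L \<eta> \<tau> f advx advc T = snd (alg3_run d L \<eta> \<tau> f advx advc T)"

definition num_corrupted :: "hist \<Rightarrow> nat" where
  "num_corrupted h = length (filter (\<lambda>(x, q, \<sigma>, cr). cr) h)"

definition total_loss :: "((nat \<Rightarrow> real) \<Rightarrow> real) \<Rightarrow> hist \<Rightarrow> real" where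
  "total_loss f h = sum_list (map (\<lambda>(x, q, \<sigma>, cr). pricing_loss (f x) q) h)"

end

theory Submission
  imports Defs
begin

lemma upd_eq:
  "alg3_update d L \<eta> \<tau> S x \<sigma> = S(cell_of d (ncells \<eta>) x :=
     (case S (cell_of d (ncells \<eta>) x) of (a, b, c) \<Rightarrow>
        if b - a < 10 * L * \<eta> then
          (if real (c + 1) > \<tau> then (if \<sigma> then (a, b, 0) else (0, L, 0))
           else (if \<sigma> then (0, L, 0) else (a, b, c + 1)))
        else (if \<sigma> then (max a 0, min b ((a + b) / 2 + L * (1 / real (ncells \<eta>))), c)
              else (max a ((a + b) / 2 - L * (1 / real (ncells \<eta>))), b, c))))"
  unfolding alg3_update_def Let_def
  by (cases "S (cell_of d (ncells \<eta>) x)") auto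

lemma guess_eq:
  "alg3_guess d L \<eta> \<tau> S x = (case S (cell_of d (ncells \<eta>) x) of (a, b, c) \<Rightarrow>
        if b - a < 10 * L * \<eta> then (if real (c + 1) > \<tau> then b else a)
        else (a + b) / 2)"
  unfolding alg3_guess_def by simp

lemma ncells_ge: assumes "\<eta> > 0" shows "real (ncells \<eta>) \<ge> 1 / \<eta>" "ncells \<eta> \<ge> 1"
proof -
  have p: "1 / \<eta> > 0" using assms by simp
  then have c0: "\<lceil>1 / \<eta>\<rceil> > 0" by simp
  then have "real (ncells \<eta>) = real_of_int \<lceil>1 / \<eta>\<rceil>" unfolding ncells_def by simp
  then show "real (ncells \<eta>) \<ge> 1 / \<eta>" by (simp add: le_of_int_ceiling)
  show "ncells \<eta> \<ge> 1" unfolding ncells_def using c0 by linarith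
qed

lemma len_le: assumes "\<eta> > 0" shows "1 / real (ncells \<eta>) \<le> \<eta>" "1 / real (ncells \<eta>) > 0"
  using ncells_ge[OF assms] assms
  by (auto simp: field_simps)

lemma coord_bound:
  fixes m :: nat and z :: real
  assumes "m \<ge> 1" "0 \<le> z" "z \<le> 1"
  shows "real (min (nat \<lfloor>z * real m\<rfloor>) (m - 1)) \<le> z * real m \<and>
         z * real m \<le> real (min (nat \<lfloor>z * real m\<rfloor>) (m - 1)) + 1"
proof -
  have zm: "0 \<le> z * real m" "z * real m \<le> real m" using assms by (auto simp: mult_le_cancel_right1)
  show ?thesis
  proof (cases "nat \<lfloor>z * real m\<rfloor> \<le> m - 1")
    case True
    then show ?thesis using zm by (simp add: min_def)
  next
    case False
    then have "int m \<le> \<lfloor>z * real m\<rfloor>" by linarith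
    then have "real m \<le> z * real m" by linarith
    moreover have "real (m - 1) = real m - 1" using assms by simp
    ultimately show ?thesis using False zm by (simp add: min_def)
  qed
qed

lemma same_cell_dist:
  assumes "d \<ge> 1" "\<eta> > 0" "x \<in> cube d" "y \<in> cube d"
    "cell_of d (ncells \<eta>) x = cell_of d (ncells \<eta>) y"
  shows "sup_dist d x y \<le> 1 / real (ncells \<eta>)"
proof -
  let ?m = "ncells \<eta>"
  have m1: "?m \<ge> 1" using ncells_ge[OF assms(2)] by simp
  have "\<bar>x i - y i\<bar> \<le> 1 / real ?m" if i: "i < d" for i
  proof -
    have eq: "min (nat \<lfloor>x i * real ?m\<rfloor>) (?m - 1) = min (nat \<lfloor>y i * real ?m\<rfloor>) (?m - 1)"
      using arg_cong[OF assms(5), of "\<lambda>l. l ! i"] i unfolding cell_of_def by simp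
    have bx: "0 \<le> x i" "x i \<le> 1" "0 \<le> y i" "y i \<le> 1" using assms(3,4) i unfolding cube_def by auto
    have "\<bar>x i * real ?m - y i * real ?m\<bar> \<le> 1"
      using coord_bound[OF m1 bx(1,2)] coord_bound[OF m1 bx(3,4)] eq by linarith
    then have "\<bar>x i - y i\<bar> * real ?m \<le> 1" by (simp add: abs_mult left_diff_distrib[symmetric])
    then show ?thesis using m1 by (simp add: field_simps)
  qed
  moreover have "0 \<in> {..<d}" using assms(1) by simp
  ultimately show ?thesis unfolding sup_dist_def
    apply (intro Max.boundedI)
      apply simp
     apply blast
    by auto
qed

definition ind :: "bool \<Rightarrow> real" where "ind P = (if P then 1 else 0)"

definition nv :: "real \<Rightarrow> real \<Rightarrow> real \<Rightarrow> cellst \<Rightarrow> bool \<Rightarrow> cellst" where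
  "nv L \<eta> \<tau> v \<sigma> = (case v of (a, b, c) \<Rightarrow>
        if b - a < 10 * L * \<eta> then
          (if real (c + 1) > \<tau> then (if \<sigma> then (a, b, 0) else (0, L, 0))
           else (if \<sigma> then (0, L, 0) else (a, b, c + 1)))
        else (if \<sigma> then (max a 0, min b ((a + b) / 2 + L * (1 / real (ncells \<eta>))), c)
              else (max a ((a + b) / 2 - L * (1 / real (ncells \<eta>))), b, c)))"

definition gv :: "real \<Rightarrow> real \<Rightarrow> real \<Rightarrow> cellst \<Rightarrow> real" where
  "gv L \<eta> \<tau> v = (case v of (a, b, c) \<Rightarrow>
        if b - a < 10 * L * \<eta> then (if real (c + 1) > \<tau> then b else a)
        else (a + b) / 2)"

lemma upd_eq2: "alg3_update d L \<eta> \<tau> S x \<sigma> = S(cell_of d (ncells \<eta>) x := nv L \<eta> \<tau> (S (cell_of d (ncells \<eta>) x)) \<sigma>)"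
  unfolding upd_eq nv_def ..

lemma guess_eq2: "alg3_guess d L \<eta> \<tau> S x = gv L \<eta> \<tau> (S (cell_of d (ncells \<eta>) x))"
  unfolding guess_eq gv_def ..

definition isS :: "real \<Rightarrow> real \<Rightarrow> cellst \<Rightarrow> bool" where
  "isS L \<eta> v = (\<not> (fst (snd v) - fst v < 10 * L * \<eta>))"
definition isC :: "real \<Rightarrow> real \<Rightarrow> real \<Rightarrow> cellst \<Rightarrow> bool" where
  "isC L \<eta> \<tau> v = (fst (snd v) - fst v < 10 * L * \<eta> \<and> real (snd (snd v) + 1) > \<tau>)"
definition isP :: "real \<Rightarrow> real \<Rightarrow> real \<Rightarrow> cellst \<Rightarrow> bool" where
  "isP L \<eta> \<tau> v = (fst (snd v) - fst v < 10 * L * \<eta> \<and> \<not> real (snd (snd v) + 1) > \<tau>)"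

definition goodv :: "real \<Rightarrow> real \<Rightarrow> cellst \<Rightarrow> bool" where
  "goodv L \<tau> v = (0 \<le> fst v \<and> fst v \<le> fst (snd v) \<and> fst (snd v) \<le> L \<and> real (snd (snd v)) \<le> \<tau>)"

definition lowb :: "nat \<Rightarrow> real \<Rightarrow> ((nat \<Rightarrow> real) \<Rightarrow> real) \<Rightarrow> nat list \<Rightarrow> cellst \<Rightarrow> bool" where
  "lowb d \<eta> f j v = (\<exists>y\<in>cube d. cell_of d (ncells \<eta>) y = j \<and> f y < fst v)"
definition highb :: "nat \<Rightarrow> real \<Rightarrow> real \<Rightarrow> ((nat \<Rightarrow> real) \<Rightarrow> real) \<Rightarrow> nat list \<Rightarrow> cellst \<Rightarrow> bool" where
  "highb d L \<eta> f j v = (\<exists>y\<in>cube d. cell_of d (ncells \<eta>) y = j \<and> f y > fst (snd v) + L * (1 / real (ncells \<eta>)))"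

definition psi :: "real \<Rightarrow> real \<Rightarrow> real \<Rightarrow> real" where
  "psi L \<eta> w = (if w < 10 * L * \<eta> then 0 else 3 * ln (w / (10 * L * \<eta>)) + 1)"

lemma ln53: "ln (5/3::real) \<ge> 1/3"
proof -
  have "ln (3/5::real) \<le> 3/5 - 1" by (rule ln_le_minus_one) simp
  moreover have "ln (3/5::real) = - ln (5/3)" by (simp add: ln_div)
  ultimately show ?thesis by simp
qed

lemma mm1: "0 \<le> a \<Longrightarrow> a \<le> b \<Longrightarrow> 0 \<le> (l::real) \<Longrightarrow>
  0 \<le> min b ((a + b) / 2 + l) - a \<and> min b ((a + b) / 2 + l) - a \<le> (b - a) / 2 + l"
  unfolding min_def by (auto simp: field_simps)

lemma mm2: "0 \<le> a \<Longrightarrow> a \<le> b \<Longrightarrow> 0 \<le> (l::real) \<Longrightarrow>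
  0 \<le> b - max a ((a + b) / 2 - l) \<and> b - max a ((a + b) / 2 - l) \<le> (b - a) / 2 + l"
  unfolding max_def by (auto simp: field_simps)

context
  fixes d :: nat and L \<eta> \<tau> :: real and f :: "(nat \<Rightarrow> real) \<Rightarrow> real"
  assumes d1: "d \<ge> 1" and Lpos: "L > 0" and etapos: "\<eta> > 0" and taupos: "\<tau> \<ge> 0"
    and lip: "lip_target d L f"
begin

lemma lenp: "1 / real (ncells \<eta>) \<le> \<eta>" "1 / real (ncells \<eta>) > 0"
  using len_le[OF etapos] by auto

lemma frange: "x \<in> cube d \<Longrightarrow> 0 \<le> f x \<and> f x \<le> L"
  using lip unfolding lip_target_def by auto

lemma lipc:
  assumes "x \<in> cube d" "y \<in> cube d" "cell_of d (ncells \<eta>) y = cell_of d (ncells \<eta>) x"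
  shows "\<bar>f x - f y\<bar> \<le> L * (1 / real (ncells \<eta>))"
proof -
  have "\<bar>f x - f y\<bar> \<le> L * sup_dist d x y" using lip assms unfolding lip_target_def by auto
  also have "\<dots> \<le> L * (1 / real (ncells \<eta>))"
    using same_cell_dist[OF d1 etapos assms(1,2)] assms(3) Lpos by (intro mult_left_mono) auto
  finally show ?thesis .
qed

lemma lvar: obtains l where "L * (1 / real (ncells \<eta>)) = l" "0 \<le> l" "l \<le> L * \<eta>"
  using lenp Lpos by (metis less_eq_real_def mult_left_mono mult_nonneg_nonneg)

lemma good_step:
  assumes "goodv L \<tau> v"
  shows "goodv L \<tau> (nv L \<eta> \<tau> v \<sigma>)"
proof -
  obtain a b c where v: "v = (a, b, c)" by (cases v) auto
  obtain l where l: "L * (1 / real (ncells \<eta>)) = l" "0 \<le> l" "l \<le> L * \<eta>" by (rule lvar)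
  show ?thesis using assms taupos Lpos l(2) unfolding v goodv_def nv_def l(1)
    apply (auto simp: min_def max_def)
    by (simp_all add: field_simps)
qed


abbreviation "lc \<equiv> L * (1 / real (ncells \<eta>))"

lemma nv_cases:
  "\<not> b - a < 10 * L * \<eta> \<Longrightarrow> nv L \<eta> \<tau> (a, b, c) True = (a, min b ((a + b) / 2 + lc), c)"
  "\<not> b - a < 10 * L * \<eta> \<Longrightarrow> nv L \<eta> \<tau> (a, b, c) False = (max a ((a + b) / 2 - lc), b, c)"
  "b - a < 10 * L * \<eta> \<Longrightarrow> real (c + 1) > \<tau> \<Longrightarrow> nv L \<eta> \<tau> (a, b, c) True = (a, b, 0)"
  "b - a < 10 * L * \<eta> \<Longrightarrow> real (c + 1) > \<tau> \<Longrightarrow> nv L \<eta> \<tau> (a, b, c) False = (0, L, 0)"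
  "b - a < 10 * L * \<eta> \<Longrightarrow> \<not> real (c + 1) > \<tau> \<Longrightarrow> nv L \<eta> \<tau> (a, b, c) True = (0, L, 0)"
  "b - a < 10 * L * \<eta> \<Longrightarrow> \<not> real (c + 1) > \<tau> \<Longrightarrow> nv L \<eta> \<tau> (a, b, c) False = (a, b, c + 1)"
  if "0 \<le> a" for a b :: real and c :: nat
  using that unfolding nv_def by auto

lemma gv_cases:
  "\<not> b - a < 10 * L * \<eta> \<Longrightarrow> gv L \<eta> \<tau> (a, b, c) = (a + b) / 2"
  "b - a < 10 * L * \<eta> \<Longrightarrow> real (c + 1) > \<tau> \<Longrightarrow> gv L \<eta> \<tau> (a, b, c) = b"
  "b - a < 10 * L * \<eta> \<Longrightarrow> \<not> real (c + 1) > \<tau> \<Longrightarrow> gv L \<eta> \<tau> (a, b, c) = a"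
  for a b :: real and c :: nat
  unfolding gv_def by auto

lemma step_cnt:
  "\<tau> * ind (isC L \<eta> \<tau> v) + real (snd (snd (nv L \<eta> \<tau> v \<sigma>))) - real (snd (snd v)) \<le> 1"
proof -
  obtain a b c where v: "v = (a, b, c)" by (cases v) auto
  show ?thesis unfolding v isC_def nv_def ind_def by auto
qed

lemma gv_nonneg: "goodv L \<tau> v \<Longrightarrow> gv L \<eta> \<tau> v \<ge> 0"
  unfolding goodv_def gv_def by (cases v) auto

lemma step_loss:
  assumes x: "x \<in> cube d" and gd: "goodv L \<tau> v"
    and sg: "\<sigma> = (if cr then \<not> (gv L \<eta> \<tau> v > f x) else gv L \<eta> \<tau> v > f x)"
  shows "pricing_loss (f x) (gv L \<eta> \<tau> v) \<le> 11 * L * \<eta> + L * (ind cr + ind (isS L \<eta> v) + ind (isC L \<eta> \<tau> v)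
      + ind (isP L \<eta> \<tau> v \<and> \<sigma> \<and> \<not> cr) + ind (isP L \<eta> \<tau> v \<and> \<not> \<sigma> \<and> \<not> cr \<and> f x > fst v + 11 * L * \<eta>))"
proof -
  obtain a b c where v: "v = (a, b, c)" by (cases v) auto
  have fx: "0 \<le> f x" "f x \<le> L" using frange[OF x] by auto
  have q0: "gv L \<eta> \<tau> v \<ge> 0" using gv_nonneg[OF gd] .
  have le: "pricing_loss (f x) (gv L \<eta> \<tau> v) \<le> L" using fx q0 unfolding pricing_loss_def by auto
  have Le: "11 * L * \<eta> \<ge> 0" using Lpos etapos by simp
  have inds: "0 \<le> ind P" for P unfolding ind_def by simp
  let ?R = "ind cr + ind (isS L \<eta> v) + ind (isC L \<eta> \<tau> v)
      + ind (isP L \<eta> \<tau> v \<and> \<sigma> \<and> \<not> cr) + ind (isP L \<eta> \<tau> v \<and> \<not> \<sigma> \<and> \<not> cr \<and> f x > fst v + 11 * L * \<eta>)"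
  show ?thesis
  proof (cases "?R \<ge> 1")
    case True
    then have "L \<le> L * ?R" using Lpos by simp
    then show ?thesis using le Le by linarith
  next
    case False
    then have h: "\<not> cr" "\<not> isS L \<eta> v" "\<not> isC L \<eta> \<tau> v" "\<not> (isP L \<eta> \<tau> v \<and> \<sigma> \<and> \<not> cr)"
      "\<not> (isP L \<eta> \<tau> v \<and> \<not> \<sigma> \<and> \<not> cr \<and> f x > fst v + 11 * L * \<eta>)"
      unfolding ind_def by (auto split: if_splits simp: inds)
    then have p: "b - a < 10 * L * \<eta>" "\<not> real (c + 1) > \<tau>" unfolding v isS_def isC_def by auto
    then have P: "isP L \<eta> \<tau> v" unfolding v isP_def by simp
    have g: "gv L \<eta> \<tau> v = a" unfolding v using gv_cases(3)[OF p] .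
    have "\<not> \<sigma>" using h(4) P h(1) by simp
    then have "a \<le> f x" using sg h(1) g by simp
    moreover have "f x \<le> a + 11 * L * \<eta>" using h(5) P h(1) \<open>\<not> \<sigma>\<close> unfolding v by auto
    ultimately have "pricing_loss (f x) (gv L \<eta> \<tau> v) \<le> 11 * L * \<eta>"
      unfolding pricing_loss_def g by simp
    moreover have "L * ?R \<ge> 0" using Lpos inds by simp
    ultimately show ?thesis by linarith
  qed
qed


abbreviation "W \<equiv> 10 * L * \<eta>"

lemma Wpos: "W > 0" using Lpos etapos by simp

lemma psi_nonneg: "psi L \<eta> w \<ge> 0"
proof (cases "w < W")
  case False
  then have "w / W \<ge> 1" using Wpos by simp
  then have "ln (w / W) \<ge> 0" by simp
  then show ?thesis using False unfolding psi_def by simp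
qed (simp add: psi_def)

lemma psi_ge1: "\<not> w < W \<Longrightarrow> psi L \<eta> w \<ge> 1"
proof -
  assume False: "\<not> w < W"
  then have "w / W \<ge> 1" using Wpos by simp
  then have "ln (w / W) \<ge> 0" by simp
  then show ?thesis using False unfolding psi_def by simp
qed

lemma psi_mono: assumes "w \<le> L" shows "psi L \<eta> w \<le> psi L \<eta> L"
proof (cases "w < W")
  case True
  then show ?thesis using psi_nonneg[of L] unfolding psi_def by simp
next
  case False
  have q: "w / W \<le> L / W" using Wpos assms by (intro divide_right_mono) auto
  have "w / W > 0" using False Wpos by simp
  then have "ln (w / W) \<le> ln (L / W)" using q by simp
  then show ?thesis using False assms unfolding psi_def by auto
qed

lemma psi_dec: assumes w: "\<not> w < W" and w': "0 \<le> w'" "w' \<le> w / 2 + lc"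
  shows "psi L \<eta> w' \<le> psi L \<eta> w - 1"
proof (cases "w' < W")
  case True
  then show ?thesis using psi_ge1[OF w] unfolding psi_def by simp
next
  case False
  have lcle: "lc \<le> L * \<eta>" using mult_left_mono[OF lenp(1), of L] Lpos by simp
  have wp: "w > 0" "w' > 0" using w False Wpos by auto
  have "w' \<le> (3/5) * w" using w' lcle w by simp
  then have "ln w' \<le> ln ((3/5) * w)" using wp by simp
  also have "\<dots> = ln (3/5) + ln w" using wp by (subst ln_mult) auto
  also have "ln (3/5::real) = - ln (5/3)" by (simp add: ln_div)
  finally have "ln w' \<le> ln w - 1/3" using ln53 by simp
  moreover have "ln (w / W) = ln w - ln W" "ln (w' / W) = ln w' - ln W"
    using wp Wpos Lpos etapos by (simp_all add: ln_div)
  ultimately show ?thesis using w False unfolding psi_def by simp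
qed

lemma step_psi:
  assumes gd: "goodv L \<tau> v"
  shows "ind (isS L \<eta> v) + psi L \<eta> (fst (snd (nv L \<eta> \<tau> v \<sigma>)) - fst (nv L \<eta> \<tau> v \<sigma>))
     - psi L \<eta> (fst (snd v) - fst v) \<le> psi L \<eta> L * (ind (isC L \<eta> \<tau> v) + ind (isP L \<eta> \<tau> v \<and> \<sigma>))"
proof -
  obtain a b c where v: "v = (a, b, c)" by (cases v) auto
  have g: "0 \<le> a" "a \<le> b" "b \<le> L" using gd unfolding v goodv_def by auto
  have P0: "psi L \<eta> L \<ge> 0" by (rule psi_nonneg)
  have pw: "psi L \<eta> (b - a) \<ge> 0" by (rule psi_nonneg)
  have lc0: "lc \<ge> 0" using lenp Lpos by simp
  show ?thesis
  proof (cases "b - a < W")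
    case False
    have "psi L \<eta> (fst (snd (nv L \<eta> \<tau> v \<sigma>)) - fst (nv L \<eta> \<tau> v \<sigma>)) \<le> psi L \<eta> (b - a) - 1"
    proof (cases \<sigma>)
      case True
      then have e: "nv L \<eta> \<tau> v \<sigma> = (a, min b ((a + b) / 2 + lc), c)"
        unfolding v using nv_cases(1)[OF g(1) False, of c] by simp
      show ?thesis unfolding e
        using mm1[OF g(1,2) lc0] by (intro psi_dec[OF False]) auto
    next
      case False': False
      then have e: "nv L \<eta> \<tau> v \<sigma> = (max a ((a + b) / 2 - lc), b, c)"
        unfolding v using nv_cases(2)[OF g(1) False, of c] by simp
      show ?thesis unfolding e
        using mm2[OF g(1,2) lc0] by (intro psi_dec[OF False]) auto
    qed
    moreover have "\<not> isC L \<eta> \<tau> v" "\<not> isP L \<eta> \<tau> v" "isS L \<eta> v"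
      using False unfolding v isC_def isP_def isS_def by auto
    ultimately show ?thesis unfolding v ind_def by simp
  next
    case True
    then have nS: "\<not> isS L \<eta> v" unfolding v isS_def by simp
    show ?thesis
    proof (cases "real (c + 1) > \<tau>")
      case C: True
      then have "isC L \<eta> \<tau> v" "\<not> isP L \<eta> \<tau> v" using True unfolding v isC_def isP_def by auto
      then show ?thesis using nS P0 pw psi_mono[of "b - a"] g
        by (cases \<sigma>) (auto simp: v ind_def nv_cases(3,4)[OF g(1) True C])
    next
      case C: False
      then have "\<not> isC L \<eta> \<tau> v" "isP L \<eta> \<tau> v" using True unfolding v isC_def isP_def by auto
      then show ?thesis using nS P0 pw psi_mono[of "b - a"] g
        by (cases \<sigma>) (auto simp: v ind_def nv_cases(5,6)[OF g(1) True C])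
    qed
  qed
qed


lemma step_low:
  assumes x: "x \<in> cube d" and gd: "goodv L \<tau> v"
    and sg: "\<sigma> = (if cr then \<not> (gv L \<eta> \<tau> v > f x) else gv L \<eta> \<tau> v > f x)"
    and j: "j = cell_of d (ncells \<eta>) x"
  shows "ind (isP L \<eta> \<tau> v \<and> \<sigma> \<and> \<not> cr) + ind (lowb d \<eta> f j (nv L \<eta> \<tau> v \<sigma>)) - ind (lowb d \<eta> f j v) \<le> ind cr"
proof -
  obtain a b c where v: "v = (a, b, c)" by (cases v) auto
  have g: "0 \<le> a" "a \<le> b" "b \<le> L" using gd unfolding v goodv_def by auto
  have lc0: "lc \<ge> 0" using lenp Lpos by simp
  have reset: "\<not> lowb d \<eta> f j (0, L, 0)" unfolding lowb_def using frange by force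
  have key: "lowb d \<eta> f j v" if nc: "\<not> cr" and lv: "lowb d \<eta> f j (nv L \<eta> \<tau> v \<sigma>)"
  proof -
    obtain y where y: "y \<in> cube d" "cell_of d (ncells \<eta>) y = j" "f y < fst (nv L \<eta> \<tau> v \<sigma>)"
      using lv unfolding lowb_def by auto
    show ?thesis
    proof (cases "b - a < W")
      case True
      then have "fst (nv L \<eta> \<tau> v \<sigma>) \<le> a" unfolding v
        using nv_cases(3-6)[OF g(1) True, of c] g by (cases "real (c + 1) > \<tau>"; cases \<sigma>) auto
      then show ?thesis using y unfolding lowb_def v by auto
    next
      case False
      show ?thesis
      proof (cases \<sigma>)
        case True
        then have "fst (nv L \<eta> \<tau> v \<sigma>) = a" unfolding v using nv_cases(1)[OF g(1) False, of c] by simp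
        then show ?thesis using y unfolding lowb_def v by auto
      next
        case F: False
        then have e: "fst (nv L \<eta> \<tau> v \<sigma>) = max a ((a + b) / 2 - lc)" unfolding v using nv_cases(2)[OF g(1) False, of c] by simp
        have "(a + b) / 2 \<le> f x" using sg nc F gv_cases(1)[OF False, of c] unfolding v by simp
        moreover have "\<bar>f x - f y\<bar> \<le> lc" using lipc[OF x y(1)] y(2) j by simp
        ultimately have "f y \<ge> (a + b) / 2 - lc" by linarith
        then have "f y < a" using y(3) e by (auto simp: max_def split: if_splits)
        then show ?thesis using y unfolding lowb_def v by auto
      qed
    qed
  qed
  have ups: "lowb d \<eta> f j v \<and> \<not> lowb d \<eta> f j (nv L \<eta> \<tau> v \<sigma>)" if u: "isP L \<eta> \<tau> v \<and> \<sigma> \<and> \<not> cr"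
  proof -
    have p: "b - a < W" "\<not> real (c + 1) > \<tau>" using u unfolding v isP_def by auto
    have "f x < a" using sg u gv_cases(3)[OF p] unfolding v by simp
    then have "lowb d \<eta> f j v" unfolding lowb_def v using x j by auto
    moreover have "nv L \<eta> \<tau> v \<sigma> = (0, L, 0)" using u nv_cases(5)[OF g(1) p] unfolding v by simp
    ultimately show ?thesis using reset by simp
  qed
  show ?thesis
  proof (cases cr)
    case True
    then show ?thesis unfolding ind_def by auto
  next
    case False
    show ?thesis
    proof (cases "isP L \<eta> \<tau> v \<and> \<sigma> \<and> \<not> cr")
      case True
      then show ?thesis using ups[OF True] False unfolding ind_def by simp
    next
      case nu: False
      then show ?thesis using key[OF False] False unfolding ind_def by auto
    qed
  qed
qed

definition hpot :: "nat list \<Rightarrow> cellst \<Rightarrow> real" where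
  "hpot j v = ind (highb d L \<eta> f j v) * (\<tau> - real (snd (snd v)))"


lemma step_high:
  assumes x: "x \<in> cube d" and gd: "goodv L \<tau> v"
    and sg: "\<sigma> = (if cr then \<not> (gv L \<eta> \<tau> v > f x) else gv L \<eta> \<tau> v > f x)"
    and j: "j = cell_of d (ncells \<eta>) x"
  shows "ind (isP L \<eta> \<tau> v \<and> \<not> \<sigma> \<and> \<not> cr \<and> f x > fst v + 11 * L * \<eta>)
     + hpot j (nv L \<eta> \<tau> v \<sigma>) - hpot j v \<le> \<tau> * ind cr"
proof -
  obtain a b c where v: "v = (a, b, c)" by (cases v) auto
  have g: "0 \<le> a" "a \<le> b" "b \<le> L" "real c \<le> \<tau>" using gd unfolding v goodv_def by auto
  have gd': "goodv L \<tau> (nv L \<eta> \<tau> v \<sigma>)" by (rule good_step[OF gd])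
  have lc0: "lc \<ge> 0" using lenp Lpos by simp
  have lcle: "lc \<le> L * \<eta>" using mult_left_mono[OF lenp(1), of L] Lpos by simp
  have hp0: "hpot j w \<ge> 0" if "goodv L \<tau> w" for w
    using that unfolding hpot_def goodv_def ind_def by auto
  have hpt: "hpot j w \<le> \<tau>" for w
    using taupos unfolding hpot_def ind_def by auto
  have reset: "\<not> highb d L \<eta> f j (0, L, 0)"
  proof -
    have "f y \<le> L + lc" if "y \<in> cube d" for y
      using frange[OF that] lc0 by linarith
    then show ?thesis unfolding highb_def by force
  qed
  have lipx: "\<bar>f x - f y\<bar> \<le> lc" if "y \<in> cube d" "cell_of d (ncells \<eta>) y = j" for y
    using lipc[OF x that(1)] that(2) j by simp
  show ?thesis
  proof (cases cr)
    case True
    then show ?thesis using hp0[OF gd] hpt[of "nv L \<eta> \<tau> v \<sigma>"] unfolding ind_def by auto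
  next
    case nc: False
    show ?thesis
    proof (cases "b - a < W")
      case S: False
      then have nP: "\<not> isP L \<eta> \<tau> v" unfolding v isP_def by simp
      have "highb d L \<eta> f j v" if hb: "highb d L \<eta> f j (nv L \<eta> \<tau> v \<sigma>)"
      proof (cases \<sigma>)
        case True
        then have e: "nv L \<eta> \<tau> v \<sigma> = (a, min b ((a + b) / 2 + lc), c)" unfolding v using nv_cases(1)[OF g(1) S, of c] by simp
        obtain y where y: "y \<in> cube d" "cell_of d (ncells \<eta>) y = j" "f y > min b ((a + b) / 2 + lc) + lc"
          using hb unfolding highb_def e by auto
        have "(a + b) / 2 > f x" using sg nc True gv_cases(1)[OF S, of c] unfolding v by simp
        then have "f y < (a + b) / 2 + lc" using lipx[OF y(1,2)] by linarith
        moreover have "min b ((a + b) / 2 + lc) = b \<or> min b ((a + b) / 2 + lc) = (a + b) / 2 + lc"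
          by linarith
        ultimately have "f y > b + lc" using y(3) lc0 by auto
        then show ?thesis using y unfolding highb_def v by auto
      next
        case False
        then have e: "nv L \<eta> \<tau> v \<sigma> = (max a ((a + b) / 2 - lc), b, c)" unfolding v using nv_cases(2)[OF g(1) S, of c] by simp
        show ?thesis using hb unfolding highb_def e by (simp add: v)
      qed
      moreover have "snd (snd (nv L \<eta> \<tau> v \<sigma>)) = c" unfolding v using nv_cases(1,2)[OF g(1) S, of c] by (cases \<sigma>) auto
      ultimately have "hpot j (nv L \<eta> \<tau> v \<sigma>) \<le> hpot j v" unfolding hpot_def ind_def v using g(4) by auto
      then show ?thesis using nP nc unfolding ind_def by simp
    next
      case T: True
      show ?thesis
      proof (cases "real (c + 1) > \<tau>")
        case C: True
        then have nP: "\<not> isP L \<eta> \<tau> v" unfolding v isP_def by simp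
        show ?thesis
        proof (cases \<sigma>)
          case True
          then have e: "nv L \<eta> \<tau> v \<sigma> = (a, b, 0)" unfolding v using nv_cases(3)[OF g(1) T C] by simp
          have "b > f x" using sg nc True gv_cases(2)[OF T C] unfolding v by simp
          then have "\<not> highb d L \<eta> f j (a, b, 0)" unfolding highb_def using lipx by force
          then have "hpot j (nv L \<eta> \<tau> v \<sigma>) = 0" unfolding e hpot_def ind_def by simp
          then show ?thesis using nP nc hp0[OF gd] unfolding ind_def by simp
        next
          case False
          then have e: "nv L \<eta> \<tau> v \<sigma> = (0, L, 0)" unfolding v using nv_cases(4)[OF g(1) T C] by simp
          then have "hpot j (nv L \<eta> \<tau> v \<sigma>) = 0" using reset unfolding hpot_def ind_def by simp
          then show ?thesis using nP nc hp0[OF gd] unfolding ind_def by simp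
        qed
      next
        case C: False
        then have P: "isP L \<eta> \<tau> v" using T unfolding v isP_def by simp
        show ?thesis
        proof (cases \<sigma>)
          case True
          then have e: "nv L \<eta> \<tau> v \<sigma> = (0, L, 0)" unfolding v using nv_cases(5)[OF g(1) T C] by simp
          then have "hpot j (nv L \<eta> \<tau> v \<sigma>) = 0" using reset unfolding hpot_def ind_def by simp
          then show ?thesis using True nc hp0[OF gd] unfolding ind_def by simp
        next
          case False
          then have e: "nv L \<eta> \<tau> v \<sigma> = (a, b, c + 1)" unfolding v using nv_cases(6)[OF g(1) T C] by simp
          have hs: "highb d L \<eta> f j (nv L \<eta> \<tau> v \<sigma>) = highb d L \<eta> f j v" unfolding highb_def e by (simp add: v)
          show ?thesis
          proof (cases "f x > a + 11 * L * \<eta>")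
            case True
            then have "f x > b + lc" using T lcle by simp
            then have "highb d L \<eta> f j v" unfolding highb_def v using x j by auto
            then show ?thesis using hs P False nc True unfolding hpot_def ind_def e by (simp add: v)
          next
            case F2: False
            show ?thesis using hs F2 nc unfolding hpot_def ind_def e by (auto simp: v)
          qed
        qed
      qed
    qed
  qed
qed

end

lemma telescope:
  fixes e F r :: "nat \<Rightarrow> real"
  assumes "\<And>t. t < T \<Longrightarrow> e t + F (Suc t) - F t \<le> r t"
  shows "(\<Sum>t<T. e t) \<le> F 0 - F T + (\<Sum>t<T. r t)"
  using assms
proof (induction T)
  case (Suc T)
  have "(\<Sum>t<T. e t) \<le> F 0 - F T + (\<Sum>t<T. r t)" using Suc by simp
  moreover have "e T + F (Suc T) - F T \<le> r T" using Suc.prems by simp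
  ultimately show ?case by simp
qed simp

lemma sum_upd:
  fixes g :: "'a \<Rightarrow> 'b \<Rightarrow> real"
  assumes "finite A" "j \<in> A"
  shows "(\<Sum>i\<in>A. g i ((S(j := w)) i)) = (\<Sum>i\<in>A. g i (S i)) - g j (S j) + g j w"
proof -
  have "(\<Sum>i\<in>A. g i ((S(j := w)) i)) = g j w + (\<Sum>i\<in>A - {j}. g i ((S(j := w)) i))"
    using assms by (subst sum.remove[of A j]) auto
  also have "(\<Sum>i\<in>A - {j}. g i ((S(j := w)) i)) = (\<Sum>i\<in>A - {j}. g i (S i))"
    by (rule sum.cong) auto
  also have "\<dots> = (\<Sum>i\<in>A. g i (S i)) - g j (S j)"
    using assms by (subst sum.remove[of A j]) auto
  finally show ?thesis by simp
qed

lemma ind_nonneg: "ind P \<ge> 0" and ind_le1: "ind P \<le> 1" unfolding ind_def by auto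

context
  fixes d :: nat and L \<eta> \<tau> :: real and f :: "(nat \<Rightarrow> real) \<Rightarrow> real"
    and advx :: "hist \<Rightarrow> (nat \<Rightarrow> real)" and advc :: "hist \<Rightarrow> (nat \<Rightarrow> real) \<Rightarrow> real \<Rightarrow> bool"
  assumes d1: "d \<ge> 1" and Lpos: "L > 0" and etapos: "\<eta> > 0" and taupos: "\<tau> \<ge> 0"
    and lip: "lip_target d L f" and advx: "\<And>h. advx h \<in> cube d"
begin

definition "St t = fst (alg3_run d L \<eta> \<tau> f advx advc t)"
definition "Hi t = snd (alg3_run d L \<eta> \<tau> f advx advc t)"
definition "xs t = advx (Hi t)"
definition "cj t = cell_of d (ncells \<eta>) (xs t)"
definition "vt t = St t (cj t)"
definition "qs t = gv L \<eta> \<tau> (vt t)"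
definition "crs t = advc (Hi t) (xs t) (qs t)"
definition "sgs t = (if crs t then \<not> (qs t > f (xs t)) else qs t > f (xs t))"
definition "cells = {l. set l \<subseteq> {..<ncells \<eta>} \<and> length l = d}"

lemma run_Suc: "alg3_run d L \<eta> \<tau> f advx advc (Suc t) =
   ((St t)(cj t := nv L \<eta> \<tau> (vt t) (sgs t)), Hi t @ [(xs t, qs t, sgs t, crs t)])"
proof -
  obtain S h where r: "alg3_run d L \<eta> \<tau> f advx advc t = (S, h)" by (cases "alg3_run d L \<eta> \<tau> f advx advc t") auto
  have SH: "St t = S" "Hi t = h" unfolding St_def Hi_def r by simp_all
  show ?thesis
    by (simp add: r SH Let_def upd_eq2 guess_eq2 xs_def cj_def vt_def qs_def crs_def sgs_def)
qed

lemma St_Suc: "St (Suc t) = (St t)(cj t := nv L \<eta> \<tau> (vt t) (sgs t))"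
  unfolding St_def[of "Suc t"] run_Suc by simp
lemma Hi_Suc: "Hi (Suc t) = Hi t @ [(xs t, qs t, sgs t, crs t)]"
  unfolding Hi_def[of "Suc t"] run_Suc by simp
lemma St0: "St 0 = (\<lambda>_. (0, L, 0))" unfolding St_def by simp
lemma Hi0: "Hi 0 = []" unfolding Hi_def by simp

lemma good_all: "goodv L \<tau> (St t j)"
proof (induction t arbitrary: j)
  case 0
  then show ?case using Lpos taupos unfolding St0 goodv_def by simp
next
  case (Suc t)
  then show ?case unfolding St_Suc vt_def
    using good_step[OF d1 Lpos etapos taupos lip] by simp
qed

lemma loss_sum: "total_loss f (Hi T) = (\<Sum>t<T. pricing_loss (f (xs t)) (qs t))"
  by (induction T) (simp_all add: Hi0 Hi_Suc total_loss_def)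

lemma nc_sum: "real (num_corrupted (Hi T)) = (\<Sum>t<T. ind (crs t))"
  by (induction T) (simp_all add: Hi0 Hi_Suc num_corrupted_def ind_def)

lemma fin_cells: "finite cells" unfolding cells_def by (rule finite_lists_length_eq) simp
lemma card_cells: "card cells = ncells \<eta> ^ d" unfolding cells_def by (subst card_lists_length_eq) simp_all
lemma cj_cells: "cj t \<in> cells"
proof -
  have "ncells \<eta> \<ge> 1" using ncells_ge[OF etapos] by simp
  then show ?thesis unfolding cells_def cj_def cell_of_def by auto
qed

lemma pot_step:
  fixes g :: "nat list \<Rightarrow> cellst \<Rightarrow> real"
  shows "(\<Sum>i\<in>cells. g i (St (Suc t) i)) - (\<Sum>i\<in>cells. g i (St t i))
     = g (cj t) (nv L \<eta> \<tau> (vt t) (sgs t)) - g (cj t) (vt t)"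
  unfolding St_Suc sum_upd[OF fin_cells cj_cells] vt_def by simp


lemma sgs_eq: "sgs t = (if crs t then \<not> (gv L \<eta> \<tau> (vt t) > f (xs t)) else gv L \<eta> \<tau> (vt t) > f (xs t))"
  unfolding sgs_def qs_def ..

lemma xs_cube: "xs t \<in> cube d" unfolding xs_def by (rule advx)

lemma good_vt: "goodv L \<tau> (vt t)" unfolding vt_def by (rule good_all)
lemma cj_eq: "cj t = cell_of d (ncells \<eta>) (xs t)" by (simp add: cj_def)

lemma cnt_bound: "\<tau> * (\<Sum>t<T. ind (isC L \<eta> \<tau> (vt t))) \<le> real T"
proof -
  let ?F = "\<lambda>t. \<Sum>i\<in>cells. real (snd (snd (St t i)))"
  have "(\<Sum>t<T. \<tau> * ind (isC L \<eta> \<tau> (vt t))) \<le> ?F 0 - ?F T + (\<Sum>t<T. 1)"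
  proof (rule telescope)
    fix t assume "t < T"
    have "?F (Suc t) - ?F t = real (snd (snd (nv L \<eta> \<tau> (vt t) (sgs t)))) - real (snd (snd (vt t)))"
      by (rule pot_step)
    then show "\<tau> * ind (isC L \<eta> \<tau> (vt t)) + ?F (Suc t) - ?F t \<le> 1"
      using step_cnt[OF d1 Lpos etapos taupos lip, of "vt t" "sgs t"] by simp
  qed
  moreover have "?F 0 = 0" unfolding St0 by simp
  moreover have "?F T \<ge> 0" by (intro sum_nonneg) simp
  ultimately show ?thesis by (simp add: sum_distrib_left)
qed

lemma low_bound: "(\<Sum>t<T. ind (isP L \<eta> \<tau> (vt t) \<and> sgs t \<and> \<not> crs t)) \<le> (\<Sum>t<T. ind (crs t))"
proof -
  let ?F = "\<lambda>t. \<Sum>i\<in>cells. ind (lowb d \<eta> f i (St t i))"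
  have "(\<Sum>t<T. ind (isP L \<eta> \<tau> (vt t) \<and> sgs t \<and> \<not> crs t)) \<le> ?F 0 - ?F T + (\<Sum>t<T. ind (crs t))"
  proof (rule telescope)
    fix t assume "t < T"
    have "?F (Suc t) - ?F t = ind (lowb d \<eta> f (cj t) (nv L \<eta> \<tau> (vt t) (sgs t))) - ind (lowb d \<eta> f (cj t) (vt t))"
      by (rule pot_step)
    then show "ind (isP L \<eta> \<tau> (vt t) \<and> sgs t \<and> \<not> crs t) + ?F (Suc t) - ?F t \<le> ind (crs t)"
      using step_low[OF d1 Lpos etapos taupos lip xs_cube good_vt sgs_eq cj_eq, of t] by simp
  qed
  moreover have "?F 0 = 0" unfolding St0 lowb_def ind_def using frange[OF d1 Lpos etapos taupos lip]
    by (auto intro!: sum.neutral) (meson linorder_not_less)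
  moreover have "?F T \<ge> 0" by (intro sum_nonneg) (simp add: ind_nonneg)
  ultimately show ?thesis by simp
qed


lemma high_bound: "(\<Sum>t<T. ind (isP L \<eta> \<tau> (vt t) \<and> \<not> sgs t \<and> \<not> crs t \<and> f (xs t) > fst (vt t) + 11 * L * \<eta>))
   \<le> \<tau> * (\<Sum>t<T. ind (crs t))"
proof -
  let ?F = "\<lambda>t. \<Sum>i\<in>cells. hpot d L \<eta> \<tau> f i (St t i)"
  have "(\<Sum>t<T. ind (isP L \<eta> \<tau> (vt t) \<and> \<not> sgs t \<and> \<not> crs t \<and> f (xs t) > fst (vt t) + 11 * L * \<eta>))
     \<le> ?F 0 - ?F T + (\<Sum>t<T. \<tau> * ind (crs t))"
  proof (rule telescope)
    fix t assume "t < T"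
    have "?F (Suc t) - ?F t = hpot d L \<eta> \<tau> f (cj t) (nv L \<eta> \<tau> (vt t) (sgs t)) - hpot d L \<eta> \<tau> f (cj t) (vt t)"
      by (rule pot_step)
    then show "ind (isP L \<eta> \<tau> (vt t) \<and> \<not> sgs t \<and> \<not> crs t \<and> f (xs t) > fst (vt t) + 11 * L * \<eta>)
       + ?F (Suc t) - ?F t \<le> \<tau> * ind (crs t)"
      using step_high[OF d1 Lpos etapos taupos lip xs_cube good_vt sgs_eq cj_eq, of t] by simp
  qed
  moreover have "?F 0 = 0"
  proof -
    have "\<not> highb d L \<eta> f i (0, L, 0)" for i
    proof -
      have "f y \<le> L + L * (1 / real (ncells \<eta>))" if "y \<in> cube d" for y
        using frange[OF d1 Lpos etapos taupos lip that] lenp[OF d1 Lpos etapos taupos lip] Lpos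
        by (smt (verit, best) mult_nonneg_nonneg)
      then show ?thesis unfolding highb_def by force
    qed
    then show ?thesis unfolding St0 by (simp add: hpot_def[OF d1 Lpos etapos taupos lip] ind_def)
  qed
  moreover have "?F T \<ge> 0"
    using good_all[of T] unfolding hpot_def[OF d1 Lpos etapos taupos lip] goodv_def ind_def by (intro sum_nonneg) auto
  ultimately show ?thesis by (simp add: sum_distrib_left)
qed

lemma psi_bound: "(\<Sum>t<T. ind (isS L \<eta> (vt t))) \<le> psi L \<eta> L * real (card cells)
   + psi L \<eta> L * ((\<Sum>t<T. ind (isC L \<eta> \<tau> (vt t))) + (\<Sum>t<T. ind (isP L \<eta> \<tau> (vt t) \<and> sgs t)))"
proof -
  let ?F = "\<lambda>t. \<Sum>i\<in>cells. psi L \<eta> (fst (snd (St t i)) - fst (St t i))"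
  have "(\<Sum>t<T. ind (isS L \<eta> (vt t))) \<le> ?F 0 - ?F T
     + (\<Sum>t<T. psi L \<eta> L * (ind (isC L \<eta> \<tau> (vt t)) + ind (isP L \<eta> \<tau> (vt t) \<and> sgs t)))"
  proof (rule telescope)
    fix t assume "t < T"
    have "?F (Suc t) - ?F t = psi L \<eta> (fst (snd (nv L \<eta> \<tau> (vt t) (sgs t))) - fst (nv L \<eta> \<tau> (vt t) (sgs t)))
        - psi L \<eta> (fst (snd (vt t)) - fst (vt t))"
      by (rule pot_step)
    then show "ind (isS L \<eta> (vt t)) + ?F (Suc t) - ?F t
       \<le> psi L \<eta> L * (ind (isC L \<eta> \<tau> (vt t)) + ind (isP L \<eta> \<tau> (vt t) \<and> sgs t))"
      using step_psi[OF d1 Lpos etapos taupos lip good_vt, of t "sgs t"] by simp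
  qed
  moreover have "?F 0 = psi L \<eta> L * real (card cells)" unfolding St0 by simp
  moreover have "?F T \<ge> 0" by (intro sum_nonneg) (simp add: psi_nonneg[OF d1 Lpos etapos taupos lip])
  ultimately show ?thesis by (simp add: sum_distrib_left sum.distrib distrib_left)
qed

lemma loss_bound: "total_loss f (Hi T) \<le> 11 * L * \<eta> * real T + L * ((\<Sum>t<T. ind (crs t))
   + (\<Sum>t<T. ind (isS L \<eta> (vt t))) + (\<Sum>t<T. ind (isC L \<eta> \<tau> (vt t)))
   + (\<Sum>t<T. ind (isP L \<eta> \<tau> (vt t) \<and> sgs t \<and> \<not> crs t))
   + (\<Sum>t<T. ind (isP L \<eta> \<tau> (vt t) \<and> \<not> sgs t \<and> \<not> crs t \<and> f (xs t) > fst (vt t) + 11 * L * \<eta>)))"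
proof -
  have "total_loss f (Hi T) \<le> (\<Sum>t<T. 11 * L * \<eta> + L * (ind (crs t) + ind (isS L \<eta> (vt t)) + ind (isC L \<eta> \<tau> (vt t))
      + ind (isP L \<eta> \<tau> (vt t) \<and> sgs t \<and> \<not> crs t) + ind (isP L \<eta> \<tau> (vt t) \<and> \<not> sgs t \<and> \<not> crs t \<and> f (xs t) > fst (vt t) + 11 * L * \<eta>)))"
    unfolding loss_sum qs_def
    by (intro sum_mono step_loss[OF d1 Lpos etapos taupos lip xs_cube good_vt sgs_eq])
  then show ?thesis by (simp add: sum.distrib sum_distrib_left distrib_left mult_ac)
qed

lemma psurp_le: "(\<Sum>t<T. ind (isP L \<eta> \<tau> (vt t) \<and> sgs t)) \<le> (\<Sum>t<T. ind (isP L \<eta> \<tau> (vt t) \<and> sgs t \<and> \<not> crs t)) + (\<Sum>t<T. ind (crs t))"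
  unfolding sum.distrib[symmetric] by (intro sum_mono) (auto simp: ind_def)


lemma main_bound:
  "\<exists>Nc Nu Ne. 0 \<le> Nc \<and> \<tau> * Nc \<le> real T \<and> 0 \<le> Nu \<and> Nu \<le> real (num_corrupted (run_hist d L \<eta> \<tau> f advx advc T))
    \<and> 0 \<le> Ne \<and> Ne \<le> \<tau> * real (num_corrupted (run_hist d L \<eta> \<tau> f advx advc T))
    \<and> real (num_corrupted (run_hist d L \<eta> \<tau> f advx advc T)) \<le> real T
    \<and> total_loss f (run_hist d L \<eta> \<tau> f advx advc T) \<le> 11 * L * \<eta> * real T
       + L * (real (num_corrupted (run_hist d L \<eta> \<tau> f advx advc T))
         + psi L \<eta> L * (real (ncells \<eta> ^ d) + Nc + Nu + real (num_corrupted (run_hist d L \<eta> \<tau> f advx advc T)))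
         + Nc + Nu + Ne)"
proof -
  have rh: "run_hist d L \<eta> \<tau> f advx advc T = Hi T" unfolding run_hist_def Hi_def ..
  define NC where "NC = (\<Sum>t<T. ind (crs t))"
  define Nc where "Nc = (\<Sum>t<T. ind (isC L \<eta> \<tau> (vt t)))"
  define Nu where "Nu = (\<Sum>t<T. ind (isP L \<eta> \<tau> (vt t) \<and> sgs t \<and> \<not> crs t))"
  define Ne where "Ne = (\<Sum>t<T. ind (isP L \<eta> \<tau> (vt t) \<and> \<not> sgs t \<and> \<not> crs t \<and> f (xs t) > fst (vt t) + 11 * L * \<eta>))"
  define Ns where "Ns = (\<Sum>t<T. ind (isS L \<eta> (vt t)))"
  define Np where "Np = (\<Sum>t<T. ind (isP L \<eta> \<tau> (vt t) \<and> sgs t))"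
  define P where "P = psi L \<eta> L"
  have ncs: "real (num_corrupted (run_hist d L \<eta> \<tau> f advx advc T)) = NC" unfolding rh nc_sum NC_def ..
  have P0: "P \<ge> 0" unfolding P_def by (rule psi_nonneg[OF d1 Lpos etapos taupos lip])
  have nn: "0 \<le> Nc" "0 \<le> Nu" "0 \<le> Ne" "0 \<le> NC" unfolding Nc_def Nu_def Ne_def NC_def
    by (simp_all add: sum_nonneg ind_nonneg)
  have NCT: "NC \<le> real T" unfolding NC_def using sum_mono[of "{..<T}" "\<lambda>t. ind (crs t)" "\<lambda>_. 1"] ind_le1 by simp
  have Ns: "Ns \<le> P * (real (ncells \<eta> ^ d) + Nc + Nu + NC)"
  proof -
    have "Ns \<le> P * real (card cells) + P * (Nc + Np)" using psi_bound unfolding Ns_def P_def Nc_def Np_def .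
    also have "\<dots> \<le> P * real (card cells) + P * (Nc + Nu + NC)"
      using psurp_le[of T] P0 unfolding Np_def Nu_def NC_def by (intro add_left_mono mult_left_mono) auto
    finally show ?thesis unfolding card_cells by (simp add: algebra_simps)
  qed
  have L: "total_loss f (Hi T) \<le> 11 * L * \<eta> * real T + L * (NC + Ns + Nc + Nu + Ne)"
    using loss_bound unfolding NC_def Ns_def Nc_def Nu_def Ne_def .
  also have "\<dots> \<le> 11 * L * \<eta> * real T + L * (NC + P * (real (ncells \<eta> ^ d) + Nc + Nu + NC) + Nc + Nu + Ne)"
    using Ns Lpos by (intro add_left_mono mult_left_mono) auto
  finally have tl: "total_loss f (Hi T) \<le> \<dots>" .
  have c1: "\<tau> * Nc \<le> real T" using cnt_bound[of T] unfolding Nc_def .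
  have c2: "Nu \<le> NC" using low_bound[of T] unfolding Nu_def NC_def .
  have c3: "Ne \<le> \<tau> * NC" using high_bound[of T] unfolding Ne_def NC_def .
  have tl': "total_loss f (run_hist d L \<eta> \<tau> f advx advc T) \<le> 11 * L * \<eta> * real T + L * (NC + P * (real (ncells \<eta> ^ d) + Nc + Nu + NC) + Nc + Nu + Ne)"
    using tl rh by simp
  show ?thesis unfolding ncs P_def[symmetric] using nn NCT c1 c2 c3 tl' by blast
qed

end

lemma ln2_ge: "ln (2::real) \<ge> 1/2"
proof -
  have "ln (1/2::real) \<le> 1/2 - 1" by (rule ln_le_minus_one) simp
  moreover have "ln (1/2::real) = - ln 2" by (simp add: ln_div)
  ultimately show ?thesis by simp
qed

lemma final_arith:
  fixes L NC Nc Nu Ne P lg M D R tot :: real and d :: nat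
  assumes L: "L > 0" and nc: "0 \<le> NC" "NC \<le> R" and c: "0 \<le> Nc" "Nc \<le> R" and u: "0 \<le> Nu" "Nu \<le> NC"
    and e: "0 \<le> Ne" "Ne \<le> R" and p: "0 \<le> P" "P \<le> 5 * lg" and lg: "1 \<le> 2 * lg"
    and m: "0 \<le> M" "M \<le> 2 ^ d * D" and D: "D \<ge> 0" and R: "R \<ge> 0"
    and tot: "tot \<le> 11 * L * D + L * (NC + P * (M + Nc + Nu + NC) + Nc + Nu + Ne)"
  shows "tot \<le> (23 + 5 * 2 ^ d) * L * lg ^ 1 * (D + R)"
proof -
  have lg0: "lg \<ge> 0" using lg by simp
  have A: "P * (M + Nc + Nu + NC) \<le> P * (M + 3 * R)" using p nc c u by (intro mult_left_mono) auto
  have B: "P * (M + 3 * R) \<le> (5 * lg) * (2 ^ d * D + 3 * R)" using p m R by (intro mult_mono) auto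
  have X: "NC + P * (M + Nc + Nu + NC) + Nc + Nu + Ne \<le> 4 * R + 5 * lg * (2 ^ d * D + 3 * R)"
    using A B nc c u e by linarith
  have D2: "11 * D \<le> 22 * lg * D" using mult_right_mono[of 11 "22 * lg" D] lg D by simp
  have R2: "4 * R \<le> 8 * lg * R" using mult_right_mono[of 4 "8 * lg" R] lg R by simp
  have "11 * D + (NC + P * (M + Nc + Nu + NC) + Nc + Nu + Ne) \<le> 22 * lg * D + 8 * lg * R + 5 * lg * (2 ^ d * D + 3 * R)"
    using X D2 R2 by linarith
  also have "\<dots> = lg * ((22 + 5 * 2 ^ d) * D + 23 * R)" by (simp add: algebra_simps)
  also have "\<dots> \<le> lg * ((23 + 5 * 2 ^ d) * (D + R))"
    using lg0 D R by (intro mult_left_mono) (auto simp: algebra_simps)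
  finally have Y: "11 * D + (NC + P * (M + Nc + Nu + NC) + Nc + Nu + Ne) \<le> lg * ((23 + 5 * 2 ^ d) * (D + R))" .
  have "tot \<le> L * (11 * D + (NC + P * (M + Nc + Nu + NC) + Nc + Nu + Ne))" using tot by (simp add: algebra_simps)
  also have "\<dots> \<le> L * (lg * ((23 + 5 * 2 ^ d) * (D + R)))" using Y L by (intro mult_left_mono) auto
  finally show ?thesis by (simp add: algebra_simps)
qed


lemma bound_one:
  fixes d :: nat and L :: real and T C :: nat and f advx advc
  assumes d1: "d \<ge> 1" and Lp: "L > 0" and T2: "T \<ge> 2" and C1: "C \<ge> 1" and lip: "lip_target d L f"
    and adv: "\<forall>h. advx h \<in> cube d"
    and ncC: "num_corrupted (run_hist d L (real T powr (- 1 / (real d + 1))) (sqrt (real T / real C)) f advx advc T) \<le> C"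
  shows "total_loss f (run_hist d L (real T powr (- 1 / (real d + 1))) (sqrt (real T / real C)) f advx advc T)
     \<le> (23 + 5 * 2 ^ d) * L * (ln (real T)) ^ 1 * (real T powr (real d / (real d + 1)) + sqrt (real T * real C))"
proof -
  define \<eta> where "\<eta> = real T powr (- 1 / (real d + 1))"
  define \<tau> where "\<tau> = sqrt (real T / real C)"
  define R where "R = sqrt (real T * real C)"
  define D where "D = real T powr (real d / (real d + 1))"
  define h where "h = run_hist d L \<eta> \<tau> f advx advc T"
  define NC where "NC = real (num_corrupted h)"
  have Tp: "real T > 0" "real T \<ge> 2" using T2 by auto
  have Cp: "real C \<ge> 1" using C1 by simp
  have etap: "\<eta> > 0" unfolding \<eta>_def using Tp by simp
  have taup: "\<tau> > 0" unfolding \<tau>_def using Tp Cp by simp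
  have mb: "\<exists>Nc Nu Ne. 0 \<le> Nc \<and> \<tau> * Nc \<le> real T \<and> 0 \<le> Nu \<and> Nu \<le> NC
    \<and> 0 \<le> Ne \<and> Ne \<le> \<tau> * NC \<and> NC \<le> real T
    \<and> total_loss f h \<le> 11 * L * \<eta> * real T
       + L * (NC + psi L \<eta> L * (real (ncells \<eta> ^ d) + Nc + Nu + NC) + Nc + Nu + Ne)"
    using main_bound[where T=T and advc=advc and advx=advx, OF d1 Lp etap less_imp_le[OF taup] lip adv[rule_format]]
    unfolding h_def[symmetric] NC_def[symmetric] .
  then obtain Nc Nu Ne where Nall: "0 \<le> Nc \<and> \<tau> * Nc \<le> real T \<and> 0 \<le> Nu \<and> Nu \<le> NC
    \<and> 0 \<le> Ne \<and> Ne \<le> \<tau> * NC \<and> NC \<le> real T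
    \<and> total_loss f h \<le> 11 * L * \<eta> * real T
       + L * (NC + psi L \<eta> L * (real (ncells \<eta> ^ d) + Nc + Nu + NC) + Nc + Nu + Ne)"
    by (elim exE)
  note N = Nall[THEN conjunct1] Nall[THEN conjunct2, THEN conjunct1]
    Nall[THEN conjunct2, THEN conjunct2, THEN conjunct1]
    Nall[THEN conjunct2, THEN conjunct2, THEN conjunct2, THEN conjunct1]
    Nall[THEN conjunct2, THEN conjunct2, THEN conjunct2, THEN conjunct2, THEN conjunct1]
    Nall[THEN conjunct2, THEN conjunct2, THEN conjunct2, THEN conjunct2, THEN conjunct2, THEN conjunct1]
    Nall[THEN conjunct2, THEN conjunct2, THEN conjunct2, THEN conjunct2, THEN conjunct2, THEN conjunct2, THEN conjunct1]
    Nall[THEN conjunct2, THEN conjunct2, THEN conjunct2, THEN conjunct2, THEN conjunct2, THEN conjunct2, THEN conjunct2]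
  have NCC: "NC \<le> real C" using ncC unfolding NC_def h_def \<eta>_def \<tau>_def by simp
  have NC0: "NC \<ge> 0" unfolding NC_def by simp
  have R0: "R \<ge> 0" unfolding R_def by simp
  have D0: "D \<ge> 0" unfolding D_def by simp
  have tauR: "\<tau> * R = real T"
  proof -
    have "\<tau> * R = sqrt (real T / real C * (real T * real C))" unfolding \<tau>_def R_def by (rule real_sqrt_mult[symmetric])
    also have "real T / real C * (real T * real C) = (real T)\<^sup>2" using Cp by (simp add: field_simps power2_eq_square)
    finally show ?thesis using Tp by simp
  qed
  have tauC: "\<tau> * real C = R"
  proof -
    have "\<tau> * real C = sqrt (real T / real C) * sqrt ((real C)\<^sup>2)" unfolding \<tau>_def using Cp by simp
    also have "\<dots> = sqrt (real T / real C * (real C)\<^sup>2)" by (rule real_sqrt_mult[symmetric])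
    also have "real T / real C * (real C)\<^sup>2 = real T * real C" using Cp by (simp add: field_simps power2_eq_square)
    finally show ?thesis unfolding R_def .
  qed
  have NCR: "NC \<le> R" unfolding R_def
  proof (rule real_le_rsqrt)
    have "NC * NC \<le> real T * real C" using mult_mono[OF N(7) NCC] NC0 Tp by simp
    then show "NC\<^sup>2 \<le> real T * real C" by (simp add: power2_eq_square)
  qed
  have NcR: "Nc \<le> R" using N(2) tauR taup by (metis mult_le_cancel_left_pos)
  have NeR: "Ne \<le> R" using N(6) mult_left_mono[OF NCC less_imp_le[OF taup]] tauC by linarith
  have "ln 2 \<le> ln (real T)" using Tp by simp
  then have lnT: "ln (real T) \<ge> 1/2" using ln2_ge by linarith
  have lnpos: "ln (real T) \<ge> 0" using lnT by simp
  have inv_eta: "1 / \<eta> = real T powr (1 / (real d + 1))"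
  proof -
    have "- 1 / (real d + 1) = - (1 / (real d + 1))" by simp
    then have "\<eta> = 1 / real T powr (1 / (real d + 1))" unfolding \<eta>_def by (simp only: powr_minus_divide)
    then show ?thesis by simp
  qed
  have inv_ge1: "1 / \<eta> \<ge> 1" unfolding inv_eta using Tp by (intro ge_one_powr_ge_zero) auto
  have P: "psi L \<eta> L \<le> 5 * ln (real T)"
  proof (cases "L < 10 * L * \<eta>")
    case True
    then show ?thesis unfolding psi_def using lnpos by simp
  next
    case False
    have "L / (10 * L * \<eta>) = (1 / \<eta>) / 10" using Lp by (simp add: field_simps)
    also have "\<dots> \<le> 1 / \<eta>" using inv_ge1 by simp
    finally have le: "L / (10 * L * \<eta>) \<le> 1 / \<eta>" .
    have pos: "L / (10 * L * \<eta>) > 0" using Lp etap by simp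
    have "ln (L / (10 * L * \<eta>)) \<le> ln (1 / \<eta>)"
      using iffD2[OF ln_le_cancel_iff[of "L / (10 * L * \<eta>)" "1 / \<eta>"]] le pos etap by simp
    also have "ln (1 / \<eta>) = ln (real T) / (real d + 1)" unfolding inv_eta using Tp by simp
    also have "\<dots> \<le> ln (real T) / 1" using lnpos by (intro divide_left_mono) auto
    also have "\<dots> = ln (real T)" by simp
    finally show ?thesis using False lnT unfolding psi_def by simp
  qed
  have P0: "psi L \<eta> L \<ge> 0" by (rule psi_nonneg[OF d1 Lp etap less_imp_le[OF taup] lip])
  have M: "real (ncells \<eta> ^ d) \<le> 2 ^ d * D"
  proof -
    have c0: "\<lceil>1 / \<eta>\<rceil> \<ge> 0" using inv_ge1 by simp
    have "real (ncells \<eta>) = real_of_int \<lceil>1 / \<eta>\<rceil>" unfolding ncells_def using c0 by simp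
    also have "\<dots> \<le> 1 / \<eta> + 1" by (rule of_int_ceiling_le_add_one)
    finally have "real (ncells \<eta>) \<le> 1 / \<eta> + 1" .
    also have "\<dots> \<le> 2 * (1 / \<eta>)" using inv_ge1 by simp
    finally have m: "real (ncells \<eta>) \<le> 2 * (1 / \<eta>)" .
    have "real (ncells \<eta> ^ d) = real (ncells \<eta>) ^ d" by simp
    also have "\<dots> \<le> (2 * (1 / \<eta>)) ^ d" using m by (intro power_mono) auto
    also have "\<dots> = 2 ^ d * (1 / \<eta>) ^ d" by (rule power_mult_distrib)
    also have "(1 / \<eta>) ^ d = D" unfolding inv_eta D_def using Tp
      by (simp add: powr_power field_simps)
    finally show ?thesis .
  qed
  have etaT: "\<eta> * real T = D"
  proof -
    have "\<eta> * real T = real T powr (- 1 / (real d + 1)) * real T powr 1" unfolding \<eta>_def using Tp by simp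
    also have "\<dots> = real T powr (- 1 / (real d + 1) + 1)" by (rule powr_add[symmetric])
    also have "- 1 / (real d + 1) + 1 = real d / (real d + 1)" by (simp add: field_simps)
    finally show ?thesis unfolding D_def .
  qed
  have tot: "total_loss f h \<le> 11 * L * D + L * (NC + psi L \<eta> L * (real (ncells \<eta> ^ d) + Nc + Nu + NC) + Nc + Nu + Ne)"
    using N(8) etaT by (simp add: mult.assoc)
  have "total_loss f h \<le> (23 + 5 * 2 ^ d) * L * (ln (real T)) ^ 1 * (D + R)"
    by (rule final_arith[OF Lp NC0 NCR N(1) NcR N(3) N(4) N(5) NeR P0 P _ _ M D0 R0 tot])
      (use lnT in simp_all)
  then show ?thesis unfolding h_def \<eta>_def \<tau>_def D_def R_def .
qed

theorem corollary15:
  fixes d :: nat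
  assumes "d \<ge> 1"
  shows "\<exists>K :: real. \<exists>k :: nat. \<forall>(L :: real) (T :: nat) (C :: nat) f advx advc.
    L > 0 \<longrightarrow> T \<ge> 2 \<longrightarrow> C \<ge> 1 \<longrightarrow> lip_target d L f \<longrightarrow> (\<forall>h. advx h \<in> cube d) \<longrightarrow>
    (let \<eta>0 = real T powr (- 1 / (real d + 1)); \<tau>0 = sqrt (real T / real C);
         h = run_hist d L \<eta>0 \<tau>0 f advx advc T
     in num_corrupted h \<le> C \<longrightarrow>
        total_loss f h \<le> K * L * (ln (real T)) ^ k *
          (real T powr (real d / (real d + 1)) + sqrt (real T * real C)))"
  apply (rule exI[of _ "23 + 5 * 2 ^ d"])
  apply (rule exI[of _ 1])
  unfolding Let_def using bound_one[OF assms] by blast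

end
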